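(* Consider the $K$-user time-invariant phase-fading complex Gaussian interference channel with unit per-symbol peak-power constraints described in the context. There exists a constant $c>0$ such that, with probability tending to $1$ as $K\to\infty$ (probability over the random channel phases $\{\Theta_{kj}\}$), the realized channel admits an achievable sum-rate of at least $c\,\frac{\ln K}{\ln\ln K}$. In other words, a sum-rate of $\Omega\!\left(\frac{\ln K}{\ln \ln K}\right)$ is achievable with high probability as $K\to\infty$.
   Context: There are $K$ transmitter-receiver pairs indexed by $[K]=\{1,\dots,K\}$. The channel is: for all $k\in[K]$ and time slots $t\in\mathbb{N}$, $Y_k[t]=\sum_{j=1}^K e^{i\Theta_{kj}}X_j[t]+Z_k[t]$, where $X_j[t]\in\mathbb{C}$ is the signal sent by transmitter $j$, $Y_k[t]$ is the signal received at receiver $k$, the noise $Z_k[t]$ is i.i.d. circularly symmetric complex Gaussian $\mathcal{CN}(0,1)$ (independent over $k,t$), and the phases $\{\Theta_{kj}\}_{k,j\in[K]}$ are drawn independently and uniformly from $[-\pi,\pi)$ once and stay fixed over time (time-invariant channel). All transmitters and receivers know all the phases. Inputs satisfy the peak-power constraint $|X_k[t]|^2\le 1$ for all $k,t$. A code of block length $n$ consists of encoders $f_k(n)$ mapping a message $W_k$, uniform on $\{1,\dots,2^{nR_k}\}$, to $X_k^n\in\mathbb{C}^n$, and decoders $\phi_k(n)$ mapping $Y_k^n$ to an estimate $\hat W_k$. A rate vector $(R_1,\dots,R_K)$ is achievable if there is a sequence of such codes with $\mathbb{P}[\hat W_k\ne W_k]\to 0$ as $n\to\infty$ for every $k$; a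 sum-rate $R_{sum}$ is achievable if $R_{sum}=\sum_k R_k$ for some achievable rate vector. "With high probability" means with probability (over $\{\Theta_{kj}\}$) tending to $1$ as $K\to\infty$. *)

theory Defs
  imports "HOL-Probability.Probability"
begin

text \<open>Users are indexed by 0..K-1 (i.e. the set lessThan K), time slots of a
block of length n by 0..n-1, messages of user k by 0..M_k-1.\<close>

definition cgauss :: "complex measure" where
  "cgauss = density lborel (\<lambda>z. ennreal (exp (- ((cmod z) ^ 2)) / pi))"

definition noise :: "nat \<Rightarrow> (nat \<Rightarrow> complex) measure" where
  "noise n = PiM {..<n} (\<lambda>_. cgauss)"

definition msg_size :: "nat \<Rightarrow> real \<Rightarrow> nat" where
  "msg_size n r = nat \<lceil>2 powr (real n * r)\<rceil>"

text \<open>A code of block length n for K users with message-set sizes M: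
encoders enc k w t (signal of transmitter k for message w at time t)
satisfying the peak-power constraint, and (measurable) decoders dec k.\<close>
definition is_code ::
  "nat \<Rightarrow> nat \<Rightarrow> (nat \<Rightarrow> nat) \<Rightarrow> (nat \<Rightarrow> nat \<Rightarrow> nat \<Rightarrow> complex)
   \<Rightarrow> (nat \<Rightarrow> (nat \<Rightarrow> complex) \<Rightarrow> nat) \<Rightarrow> bool" where
  "is_code K n M enc dec \<longleftrightarrow>
     (\<forall>k<K. \<forall>w<M k. \<forall>t<n. (cmod (enc k w t)) ^ 2 \<le> 1) \<and>
     (\<forall>k<K. dec k \<in> measurable (PiM {..<n} (\<lambda>_. borel)) (count_space UNIV))"

definition received ::
  "(nat \<times> nat \<Rightarrow> real) \<Rightarrow> nat \<Rightarrow> nat \<Rightarrow> (nat \<Rightarrow> nat \<Rightarrow> nat \<Rightarrow> complex)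
   \<Rightarrow> (nat \<Rightarrow> nat) \<Rightarrow> nat \<Rightarrow> (nat \<Rightarrow> complex) \<Rightarrow> (nat \<Rightarrow> complex)" where
  "received \<theta> K n enc w k z =
     restrict (\<lambda>t. (\<Sum>j<K. cis (\<theta> (k, j)) * enc j (w j) t) + z t) {..<n}"

definition err_prob ::
  "(nat \<times> nat \<Rightarrow> real) \<Rightarrow> nat \<Rightarrow> nat \<Rightarrow> (nat \<Rightarrow> nat) \<Rightarrow> (nat \<Rightarrow> nat \<Rightarrow> nat \<Rightarrow> complex)
   \<Rightarrow> (nat \<Rightarrow> (nat \<Rightarrow> complex) \<Rightarrow> nat) \<Rightarrow> nat \<Rightarrow> real" where
  "err_prob \<theta> K n M enc dec k =
     (\<Sum>w\<in>PiE {..<K} (\<lambda>j. {..<M j}).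
        measure (noise n) {z \<in> space (noise n). dec k (received \<theta> K n enc w k z) \<noteq> w k})
     / (\<Prod>j<K. real (M j))"

definition achievable_rates :: "(nat \<times> nat \<Rightarrow> real) \<Rightarrow> nat \<Rightarrow> (nat \<Rightarrow> real) \<Rightarrow> bool" where
  "achievable_rates \<theta> K R \<longleftrightarrow> (\<forall>k<K. 0 \<le> R k) \<and>
     (\<exists>enc dec. (\<forall>n. is_code K n (\<lambda>k. msg_size n (R k)) (enc n) (dec n)) \<and>
        (\<forall>k<K. (\<lambda>n. err_prob \<theta> K n (\<lambda>k. msg_size n (R k)) (enc n) (dec n) k)
                  \<longlonglongrightarrow> 0))"

definition achievable_sum_rate :: "(nat \<times> nat \<Rightarrow> real) \<Rightarrow> nat \<Rightarrow> real \<Rightarrow> bool" where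
  "achievable_sum_rate \<theta> K S \<longleftrightarrow> (\<exists>R. achievable_rates \<theta> K R \<and> (\<Sum>k<K. R k) = S)"

definition phase_measure :: "nat \<Rightarrow> (nat \<times> nat \<Rightarrow> real) measure" where
  "phase_measure K = PiM ({..<K} \<times> {..<K}) (\<lambda>_. uniform_measure lborel {-pi..<pi})"

end

theory Submission
  imports Defs "HOL-Real_Asymp.Real_Asymp"
begin


lemma gauss1d: "(\<integral>\<^sup>+x. ennreal (exp (c * x - x\<^sup>2) / sqrt pi) \<partial>lborel) = ennreal (exp (c\<^sup>2/4))"
proof -
  have eq: "exp (c * x - x\<^sup>2) / sqrt pi = exp (c\<^sup>2/4) * normal_density (c/2) (1/sqrt 2) x" for x
  proof -
    have "exp (c * x - x\<^sup>2) = exp (c\<^sup>2/4) * exp (-(x - c/2)\<^sup>2)"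
      by (subst exp_add[symmetric]) (simp add: power2_eq_square algebra_simps)
    moreover have "normal_density (c/2) (1/sqrt 2) x = exp (-(x - c/2)\<^sup>2) / sqrt pi"
      by (simp add: normal_density_def power_divide)
    ultimately show ?thesis by simp
  qed
  have "(\<integral>\<^sup>+x. ennreal (exp (c * x - x\<^sup>2) / sqrt pi) \<partial>lborel)
      = (\<integral>\<^sup>+x. ennreal (exp (c\<^sup>2/4)) * ennreal (normal_density (c/2) (1/sqrt 2) x) \<partial>lborel)"
    by (simp add: eq ennreal_mult)
  also have "\<dots> = ennreal (exp (c\<^sup>2/4)) * (\<integral>\<^sup>+x. ennreal (normal_density (c/2) (1/sqrt 2) x) \<partial>lborel)"
    by (rule nn_integral_cmult) simp
  also have "(\<integral>\<^sup>+x. ennreal (normal_density (c/2) (1/sqrt 2) x) \<partial>lborel) = 1"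
    by (subst nn_integral_eq_integral) auto
  finally show ?thesis by simp
qed

lemma cgauss_mgf:
  "(\<integral>\<^sup>+z. ennreal (exp (a * Re z)) \<partial>cgauss) = ennreal (exp (a\<^sup>2/4))"
proof -
  define f where "f b x = (if b = 1 then exp (a * x - x\<^sup>2) / sqrt pi else exp (0 * x - x\<^sup>2) / sqrt pi)" for b :: complex and x :: real
  have prod: "(\<Prod>b\<in>Basis. f b (z \<bullet> b)) = exp (- ((cmod z)\<^sup>2)) / pi * exp (a * Re z)" for z
  proof -
    have "(\<Prod>b\<in>Basis. f b (z \<bullet> b)) = f 1 (Re z) * f \<i> (Im z)"
      by (simp add: Basis_complex_def)
    also have "\<dots> = exp (a * Re z - (Re z)\<^sup>2) * exp (- (Im z)\<^sup>2) / (sqrt pi * sqrt pi)"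
      by (simp add: f_def)
    also have "\<dots> = exp (- ((cmod z)\<^sup>2)) / pi * exp (a * Re z)"
      by (simp add: cmod_power2 exp_add[symmetric] exp_diff algebra_simps)
    finally show ?thesis .
  qed
  have "(\<integral>\<^sup>+z. ennreal (exp (a * Re z)) \<partial>cgauss)
      = (\<integral>\<^sup>+z. ennreal (exp (- ((cmod z) ^ 2)) / pi) * ennreal (exp (a * Re z)) \<partial>lborel)"
    unfolding cgauss_def by (subst nn_integral_density) (auto simp: ennreal_mult[symmetric])
  also have "\<dots> = (\<integral>\<^sup>+z. (\<Prod>b\<in>Basis. ennreal (f b (z \<bullet> b))) \<partial>lborel)"
    apply (rule nn_integral_cong)
    apply (subst prod_ennreal)
     apply (simp add: f_def)
    apply (simp add: prod flip: ennreal_mult)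
    done
  also have "\<dots> = (\<Prod>b\<in>Basis. (\<integral>\<^sup>+x. ennreal (f b x) \<partial>lborel))"
    by (rule nn_integral_lborel_prod) (auto simp: f_def)
  also have "\<dots> = (\<integral>\<^sup>+x. ennreal (f 1 x) \<partial>lborel) * (\<integral>\<^sup>+x. ennreal (f \<i> x) \<partial>lborel)"
    by (simp add: Basis_complex_def)
  also have "\<dots> = ennreal (exp (a\<^sup>2/4)) * ennreal (exp (0\<^sup>2/4))"
    unfolding f_def using gauss1d[of a] gauss1d[of 0] by simp
  finally show ?thesis by simp
qed

lemma prob_space_cgauss: "prob_space cgauss"
proof
  show "emeasure cgauss (space cgauss) = 1"
    using cgauss_mgf[of 0] by simp
qed

interpretation cg: prob_space cgauss by (rule prob_space_cgauss)
interpretation cgP: product_sigma_finite "\<lambda>_::nat. cgauss" by unfold_locales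

lemma prob_space_noise: "prob_space (noise n)"
  unfolding noise_def by (rule prob_space_PiM) (rule prob_space_cgauss)

lemma sets_cgauss[simp, measurable_cong]: "sets cgauss = sets borel"
  by (simp add: cgauss_def)

lemma space_noise: "space (noise n) = PiE {..<n} (\<lambda>_. UNIV)"
  by (simp add: noise_def space_PiM cgauss_def)

lemma chernoff:
  assumes D: "D \<subseteq> {..<n}" and sg: "\<And>t. \<sigma> t = 1 \<or> \<sigma> t = -1"
  shows "emeasure (noise n) {z \<in> space (noise n). real (card D) / 2 \<le> (\<Sum>t\<in>D. \<sigma> t * Re (z t))}
           \<le> ennreal (exp (- real (card D) / 4))"
proof -
  let ?A = "{z \<in> space (noise n). real (card D) / 2 \<le> (\<Sum>t\<in>D. \<sigma> t * Re (z t))}"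
  define h where "h t x = (if t \<in> D then ennreal (exp (\<sigma> t * Re x)) else 1)" for t x
  have fD: "finite D" using D finite_subset by blast
  have meas: "?A \<in> sets (noise n)" unfolding noise_def apply measurable using D by auto
  have "emeasure (noise n) ?A = (\<integral>\<^sup>+z. indicator ?A z \<partial>noise n)"
    using meas by simp
  also have "\<dots> \<le> (\<integral>\<^sup>+z. ennreal (exp (- real (card D) / 2)) * (\<Prod>t\<in>{..<n}. h t (z t)) \<partial>noise n)"
  proof (rule nn_integral_mono)
    fix z assume z: "z \<in> space (noise n)"
    have p: "(\<Prod>t\<in>{..<n}. h t (z t)) = (\<Prod>t\<in>D. ennreal (exp (\<sigma> t * Re (z t))))"
      unfolding h_def using D by (subst prod.If_cases) (auto simp: Int_absorb1)
    also have "\<dots> = ennreal (exp (\<Sum>t\<in>D. \<sigma> t * Re (z t)))"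
      by (simp add: prod_ennreal exp_sum fD)
    finally have p: "(\<Prod>t\<in>{..<n}. h t (z t)) = ennreal (exp (\<Sum>t\<in>D. \<sigma> t * Re (z t)))" .
    show "indicator ?A z \<le> ennreal (exp (- real (card D) / 2)) * (\<Prod>t\<in>{..<n}. h t (z t))"
    proof (cases "z \<in> ?A")
      case True
      then have "exp 0 \<le> exp (- real (card D) / 2 + (\<Sum>t\<in>D. \<sigma> t * Re (z t)))" by simp
      then have "1 \<le> exp (- real (card D) / 2) * exp (\<Sum>t\<in>D. \<sigma> t * Re (z t))"
        by (simp only: exp_add[symmetric] exp_zero)
      then show ?thesis using True by (simp add: p flip: ennreal_mult)
    qed simp
  qed
  also have "\<dots> = ennreal (exp (- real (card D) / 2)) * (\<integral>\<^sup>+z. (\<Prod>t\<in>{..<n}. h t (z t)) \<partial>noise n)"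
    unfolding noise_def by (rule nn_integral_cmult) (simp add: h_def)
  also have "(\<integral>\<^sup>+z. (\<Prod>t\<in>{..<n}. h t (z t)) \<partial>noise n) = (\<Prod>t\<in>{..<n}. \<integral>\<^sup>+x. h t x \<partial>cgauss)"
    unfolding noise_def by (rule cgP.product_nn_integral_prod) (auto simp: h_def)
  also have "\<dots> = (\<Prod>t\<in>{..<n}. if t \<in> D then ennreal (exp (1/4)) else 1)"
  proof (rule prod.cong)
    fix t assume "t \<in> {..<n}"
    show "(\<integral>\<^sup>+x. h t x \<partial>cgauss) = (if t \<in> D then ennreal (exp (1/4)) else 1)"
    proof (cases "t \<in> D")
      case True
      have "(\<sigma> t)\<^sup>2 = 1" using sg[of t] by auto
      then show ?thesis using True cgauss_mgf[of "\<sigma> t"] by (simp add: h_def)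
    qed (simp add: h_def cg.emeasure_space_1)
  qed simp
  also have "\<dots> = ennreal (exp (1/4)) ^ card D"
    using D by (subst prod.If_cases) (auto simp: Int_absorb1)
  also have "ennreal (exp (- real (card D) / 2)) * \<dots> = ennreal (exp (- real (card D) / 4))"
  proof -
    have "exp (1/4) ^ card D = exp (real (card D) / 4)"
      by (simp add: exp_of_nat_mult[symmetric])
    then have "exp (- real (card D) / 2) * exp (1/4) ^ card D = exp (- real (card D) / 4)"
      by (simp add: exp_add[symmetric])
    then show ?thesis by (simp add: ennreal_power flip: ennreal_mult)
  qed
  finally show ?thesis .
qed




definition ham :: "nat \<Rightarrow> (nat \<Rightarrow> bool) \<Rightarrow> (nat \<Rightarrow> bool) \<Rightarrow> nat" where
  "ham n a b = card {t\<in>{..<n}. a t \<noteq> b t}"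

abbreviation UU :: "nat \<Rightarrow> (nat \<Rightarrow> bool) set" where
  "UU n \<equiv> PiE {..<n} (\<lambda>_. UNIV)"

lemma card_UU: "card (UU n) = 2 ^ n"
  by (simp add: card_PiE)

lemma finite_UU: "finite (UU n)"
  by (simp add: finite_PiE)

lemma ham_sym: "ham n a b = ham n b a"
  unfolding ham_def by (rule arg_cong[where f=card]) auto

lemma ball_card:
  "card {b\<in>UU n. ham n a b < d} \<le> (\<Sum>i<d. n choose i)"
proof -
  let ?f = "\<lambda>b. {t\<in>{..<n}. a t \<noteq> b t}"
  have inj: "inj_on ?f {b\<in>UU n. ham n a b < d}"
  proof (rule inj_onI)
    fix b c assume b: "b \<in> {b\<in>UU n. ham n a b < d}" and c: "c \<in> {b\<in>UU n. ham n a b < d}"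
      and eq: "?f b = ?f c"
    show "b = c"
    proof
      fix t show "b t = c t"
      proof (cases "t < n")
        case True
        then have "a t \<noteq> b t \<longleftrightarrow> a t \<noteq> c t" using eq by blast
        then show ?thesis by blast
      next
        case False then show ?thesis using b c by (auto simp: PiE_def extensional_def)
      qed
    qed
  qed
  have sub: "?f ` {b\<in>UU n. ham n a b < d} \<subseteq> (\<Union>i<d. {B. B \<subseteq> {..<n} \<and> card B = i})"
    by (auto simp: ham_def)
  have "card {b\<in>UU n. ham n a b < d} \<le> card (\<Union>i<d. {B. B \<subseteq> {..<n} \<and> card B = i})"
    by (rule card_inj_on_le[OF inj sub]) auto
  also have "\<dots> \<le> (\<Sum>i<d. card {B. B \<subseteq> {..<n} \<and> card B = i})"
    by (rule card_UN_le) simp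
  also have "\<dots> = (\<Sum>i<d. n choose i)"
    by (simp add: n_subsets)
  finally show ?thesis .
qed

lemma binom_tail:
  "real (\<Sum>i<d. n choose i) \<le> 8 ^ d * (9/8) ^ n"
proof -
  have "real (\<Sum>i<d. n choose i) = (\<Sum>i<d. real (n choose i))" by simp
  also have "\<dots> \<le> (\<Sum>i<d. real (n choose i) * (1/8)^i * 8^d)"
  proof (rule sum_mono)
    fix i assume "i \<in> {..<d}"
    then have "(8::real)^i \<le> 8^d" by (intro power_increasing) auto
    then have "1 \<le> (1/8::real)^i * 8^d" by (simp add: power_one_over field_simps)
    then show "real (n choose i) \<le> real (n choose i) * (1/8)^i * 8^d"
      by (metis mult.assoc mult_le_cancel_left1 of_nat_0_le_iff order.strict_iff_not)
  qed
  also have "\<dots> = 8^d * (\<Sum>i<d. real (n choose i) * (1/8)^i)"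
    by (simp add: sum_distrib_left algebra_simps)
  also have "(\<Sum>i<d. real (n choose i) * (1/8)^i) \<le> (\<Sum>i\<le>n. real (n choose i) * (1/8)^i)"
  proof -
    have "(\<Sum>i<d. real (n choose i) * (1/8)^i) = (\<Sum>i\<in>{..<d} \<inter> {..n}. real (n choose i) * (1/8)^i)"
      by (rule sum.mono_neutral_right) auto
    also have "\<dots> \<le> (\<Sum>i\<le>n. real (n choose i) * (1/8)^i)"
      by (rule sum_mono2) auto
    finally show ?thesis .
  qed
  also have "(\<Sum>i\<le>n. real (n choose i) * (1/8)^i) = (1/8 + 1) ^ n"
    by (subst binomial_ring) simp
  finally show ?thesis by (simp add: mult_left_mono)
qed

lemma GV:
  assumes "N * V \<le> 2 ^ n" "1 \<le> V" "\<And>a. a \<in> UU n \<Longrightarrow> card {b\<in>UU n. ham n a b < d} \<le> V" "0 < d"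
  shows "\<exists>C \<subseteq> UU n. card C = N \<and> (\<forall>a\<in>C. \<forall>b\<in>C. a \<noteq> b \<longrightarrow> d \<le> ham n a b)"
  using assms(1)
proof (induction N)
  case 0 then show ?case by (intro exI[of _ "{}"]) auto
next
  case (Suc N)
  then obtain C where C: "C \<subseteq> UU n" "card C = N" "\<forall>a\<in>C. \<forall>b\<in>C. a \<noteq> b \<longrightarrow> d \<le> ham n a b"
    by auto
  have fC: "finite C" using C(1) finite_UU finite_subset by blast
  have "card (\<Union>a\<in>C. {b\<in>UU n. ham n a b < d}) \<le> (\<Sum>a\<in>C. card {b\<in>UU n. ham n a b < d})"
    by (rule card_UN_le[OF fC])
  also have "\<dots> \<le> (\<Sum>a\<in>C. V)" using C(1) assms(3) by (intro sum_mono) auto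
  also have "\<dots> = N * V" using C(2) by simp
  also have "\<dots> < 2 ^ n" using Suc.prems assms(2) by simp
  finally have lt: "card (\<Union>a\<in>C. {b\<in>UU n. ham n a b < d}) < card (UU n)" by (simp add: card_UU)
  have "\<not> UU n \<subseteq> (\<Union>a\<in>C. {b\<in>UU n. ham n a b < d})"
  proof
    assume "UU n \<subseteq> (\<Union>a\<in>C. {b\<in>UU n. ham n a b < d})"
    then have "card (UU n) \<le> card (\<Union>a\<in>C. {b\<in>UU n. ham n a b < d})"
      by (intro card_mono) (auto intro: finite_subset[OF _ finite_UU])
    with lt show False by simp
  qed
  then obtain y where y: "y \<in> UU n" "\<forall>a\<in>C. \<not> ham n a y < d" by blast
  have yC: "y \<notin> C"
  proof
    assume "y \<in> C"
    with y have "\<not> ham n y y < d" by blast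
    moreover have "ham n y y = 0" by (simp add: ham_def)
    moreover have "d > 0" by (rule assms(4))
    ultimately show False by simp
  qed
  show ?case
    apply (rule exI[of _ "insert y C"])
    using C y yC fC by (auto simp: ham_sym not_less)
qed




definition validc :: "nat \<Rightarrow> nat \<Rightarrow> (nat \<Rightarrow> nat \<Rightarrow> bool) \<Rightarrow> bool" where
  "validc n N f \<longleftrightarrow> (\<forall>w<N. \<forall>w'<N. w \<noteq> w' \<longrightarrow> n div 8 \<le> ham n (f w) (f w'))"

abbreviation NN :: "nat \<Rightarrow> nat" where "NN n \<equiv> msg_size n (1/64)"

definition cb :: "nat \<Rightarrow> nat \<Rightarrow> nat \<Rightarrow> bool" where
  "cb n = (if \<exists>f. validc n (NN n) f then SOME f. validc n (NN n) f else (\<lambda>_ _. True))"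

definition sgnb :: "bool \<Rightarrow> real" where "sgnb b = (if b then 1 else -1)"

definition enc :: "nat set \<Rightarrow> nat \<Rightarrow> nat \<Rightarrow> nat \<Rightarrow> nat \<Rightarrow> complex" where
  "enc S n k w t = (if k \<in> S then complex_of_real (sgnb (cb n w t)) else 0)"

definition score :: "nat \<Rightarrow> nat \<Rightarrow> (nat \<Rightarrow> complex) \<Rightarrow> real" where
  "score n w y = (\<Sum>t<n. sgnb (cb n w t) * Re (y t))"

definition dec :: "nat set \<Rightarrow> nat \<Rightarrow> nat \<Rightarrow> (nat \<Rightarrow> complex) \<Rightarrow> nat" where
  "dec S n k y = (if k \<in> S then (LEAST w. w < NN n \<and> (\<forall>w'<NN n. score n w' y \<le> score n w y)) else 0)"

definition Rr :: "nat set \<Rightarrow> nat \<Rightarrow> real" where "Rr S k = (if k \<in> S then 1/64 else 0)"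

definition good :: "(nat \<times> nat \<Rightarrow> real) \<Rightarrow> nat set \<Rightarrow> bool" where
  "good \<theta> S \<longleftrightarrow> (\<forall>k\<in>S. 3/4 \<le> cos (\<theta> (k,k)) \<and> (\<Sum>j\<in>S-{k}. \<bar>cos (\<theta> (k,j))\<bar>) \<le> 1/4)"

lemma sgnb_sq[simp]: "sgnb b * sgnb b = 1" by (simp add: sgnb_def)
lemma abs_sgnb[simp]: "\<bar>sgnb b\<bar> = 1" by (simp add: sgnb_def)

lemma msg_size_pos: "0 < msg_size n r"
  unfolding msg_size_def by simp

lemma msg_size_ne0[simp]: "msg_size n r \<noteq> 0"
  using msg_size_pos[of n r] by simp

lemma msg_size_0: "msg_size n 0 = 1"
  unfolding msg_size_def by simp

lemma cb_valid: "validc n (NN n) f \<Longrightarrow> validc n (NN n) (cb n)"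
  unfolding cb_def using someI_ex[of "validc n (NN n)"] by auto

lemma Re_received:
  assumes S: "S \<subseteq> {..<K}" and k: "k \<in> S" and t: "t < n"
  shows "Re (received \<theta> K n (enc S n) w k z t)
     = cos (\<theta> (k,k)) * sgnb (cb n (w k) t) + (\<Sum>j\<in>S-{k}. cos (\<theta> (k,j)) * sgnb (cb n (w j) t)) + Re (z t)"
proof -
  have r: "received \<theta> K n (enc S n) w k z t = (\<Sum>j<K. cis (\<theta> (k, j)) * enc S n j (w j) t) + z t"
    using t unfolding received_def by simp
  have "Re (received \<theta> K n (enc S n) w k z t) = (\<Sum>j<K. Re (cis (\<theta> (k, j)) * enc S n j (w j) t)) + Re (z t)"
    unfolding r by (simp only: plus_complex.sel Re_sum)
  also have "(\<Sum>j<K. Re (cis (\<theta> (k, j)) * enc S n j (w j) t)) = (\<Sum>j\<in>S. cos (\<theta> (k,j)) * sgnb (cb n (w j) t))"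
    using S by (subst sum.mono_neutral_right[of "{..<K}" S]) (auto simp: enc_def)
  also have "\<dots> = cos (\<theta> (k,k)) * sgnb (cb n (w k) t) + (\<Sum>j\<in>S-{k}. cos (\<theta> (k,j)) * sgnb (cb n (w j) t))"
    using k S finite_subset[OF S] by (subst sum.remove[of S k]) auto
  finally show ?thesis .
qed

lemma pointwise:
  assumes "3/4 \<le> g" "\<bar>I\<bar> \<le> 1/4" "a \<noteq> b"
  shows "(sgnb b - sgnb a) * (g * sgnb a + I + x) \<le> -1 + 2 * (- sgnb a * x)"
proof -
  have b: "sgnb b = - sgnb a" using assms(3) by (cases a; cases b) (auto simp: sgnb_def)
  have i: "\<bar>sgnb a * I\<bar> \<le> 1/4" using assms(2) by (simp add: abs_mult)
  have "(sgnb b - sgnb a) * (g * sgnb a + I + x) = -2*g*(sgnb a * sgnb a) - 2*(sgnb a * I) - 2*(sgnb a*x)"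
    by (simp add: b algebra_simps)
  then show ?thesis using assms(1) i by (simp add: abs_le_iff)
qed


definition Dset :: "nat \<Rightarrow> nat \<Rightarrow> nat \<Rightarrow> nat set" where
  "Dset n v w' = {t\<in>{..<n}. cb n w' t \<noteq> cb n v t}"

definition Bset :: "nat \<Rightarrow> nat \<Rightarrow> nat \<Rightarrow> (nat \<Rightarrow> complex) set" where
  "Bset n v w' = {z \<in> space (noise n). real (card (Dset n v w')) / 2
        \<le> (\<Sum>t\<in>Dset n v w'. (- sgnb (cb n v t)) * Re (z t))}"

lemma Bset_sets: "Bset n v w' \<in> sets (noise n)"
  unfolding Bset_def noise_def apply measurable by (auto simp: Dset_def)

lemma Bset_measure: "measure (noise n) (Bset n v w') \<le> exp (- real (card (Dset n v w')) / 4)"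
proof -
  interpret N: prob_space "noise n" by (rule prob_space_noise)
  have "emeasure (noise n) (Bset n v w') \<le> ennreal (exp (- real (card (Dset n v w')) / 4))"
    unfolding Bset_def by (rule chernoff) (auto simp: Dset_def sgnb_def)
  then show ?thesis by (simp add: N.emeasure_eq_measure)
qed

lemma sum_aux: "(\<Sum>t\<in>A. -1 + 2 * f t) = - real (card A) + 2 * (\<Sum>t\<in>A. f t :: real)"
  by (simp add: sum_subtractf sum.distrib sum_distrib_left)

lemma pair_incl:
  fixes \<theta> :: "nat \<times> nat \<Rightarrow> real" and w :: "nat \<Rightarrow> nat" and z :: "nat \<Rightarrow> complex" and w' :: nat
  assumes S: "S \<subseteq> {..<K}" and k: "k \<in> S" and g: "good \<theta> S"
      and z: "z \<in> space (noise n)"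
      and le: "score n (w k) (received \<theta> K n (enc S n) w k z) \<le> score n w' (received \<theta> K n (enc S n) w k z)"
  shows "z \<in> Bset n (w k) w'"
proof -
  let ?y = "received \<theta> K n (enc S n) w k z"
  let ?D = "Dset n (w k) w'"
  define I where "I t = (\<Sum>j\<in>S-{k}. cos (\<theta> (k,j)) * sgnb (cb n (w j) t))" for t
  have fS: "finite S" using S finite_subset by blast
  have gk: "3/4 \<le> cos (\<theta> (k,k))" and gs: "(\<Sum>j\<in>S-{k}. \<bar>cos (\<theta> (k,j))\<bar>) \<le> 1/4"
    using g k by (auto simp: good_def)
  have Ib: "\<bar>I t\<bar> \<le> 1/4" for t
  proof -
    have "\<bar>I t\<bar> \<le> (\<Sum>j\<in>S-{k}. \<bar>cos (\<theta> (k,j)) * sgnb (cb n (w j) t)\<bar>)"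
      unfolding I_def by (rule sum_abs)
    also have "\<dots> = (\<Sum>j\<in>S-{k}. \<bar>cos (\<theta> (k,j))\<bar>)" by (simp add: abs_mult)
    finally show ?thesis using gs by simp
  qed
  have Re_y: "Re (?y t) = cos (\<theta> (k,k)) * sgnb (cb n (w k) t) + I t + Re (z t)" if "t < n" for t
    using Re_received[OF S k that] unfolding I_def by simp
  have "0 \<le> score n w' ?y - score n (w k) ?y" using le by simp
  also have "score n w' ?y - score n (w k) ?y = (\<Sum>t<n. (sgnb (cb n w' t) - sgnb (cb n (w k) t)) * Re (?y t))"
    unfolding score_def by (simp add: sum_subtractf left_diff_distrib)
  also have "\<dots> = (\<Sum>t\<in>?D. (sgnb (cb n w' t) - sgnb (cb n (w k) t)) * Re (?y t))"
    by (rule sum.mono_neutral_right) (auto simp: Dset_def)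
  also have "\<dots> \<le> (\<Sum>t\<in>?D. -1 + 2 * ((- sgnb (cb n (w k) t)) * Re (z t)))"
  proof (rule sum_mono)
    fix t assume t: "t \<in> ?D"
    then have "t < n" "cb n (w k) t \<noteq> cb n w' t" by (auto simp: Dset_def)
    then show "(sgnb (cb n w' t) - sgnb (cb n (w k) t)) * Re (?y t) \<le> -1 + 2 * ((- sgnb (cb n (w k) t)) * Re (z t))"
      using pointwise[of "cos (\<theta> (k,k))" "I t" "cb n (w k) t" "cb n w' t" "Re (z t)"] gk Ib[of t] Re_y by simp
  qed
  also have "\<dots> = - real (card ?D) + 2 * (\<Sum>t\<in>?D. (- sgnb (cb n (w k) t)) * Re (z t))"
    by (rule sum_aux)
  finally show ?thesis using z unfolding Bset_def by simp
qed


lemma argmax_exists: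
  fixes f :: "nat \<Rightarrow> real"
  assumes "0 < N" shows "\<exists>v. v < N \<and> (\<forall>w'<N. f w' \<le> f v)"
proof -
  have "Max (f ` {..<N}) \<in> f ` {..<N}" using assms by (intro Max_in) auto
  then obtain v where v: "v < N" "f v = Max (f ` {..<N})" by auto
  show ?thesis using v by (intro exI[of _ v]) auto
qed

lemma dec_prop:
  assumes "k \<in> S"
  shows "dec S n k y < NN n \<and> (\<forall>w'<NN n. score n w' y \<le> score n (dec S n k y) y)"
proof -
  have "\<exists>v. v < NN n \<and> (\<forall>w'<NN n. score n w' y \<le> score n v y)"
    by (rule argmax_exists) (rule msg_size_pos)
  then have "(\<lambda>v. v < NN n \<and> (\<forall>w'<NN n. score n w' y \<le> score n v y))
     (LEAST v. v < NN n \<and> (\<forall>w'<NN n. score n w' y \<le> score n v y))" by (rule LeastI_ex)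
  then show ?thesis unfolding dec_def using assms by simp
qed

lemma err_set_incl:
  assumes S: "S \<subseteq> {..<K}" and k: "k \<in> S" and g: "good \<theta> S" and wk: "w k < NN n"
  shows "{z \<in> space (noise n). dec S n k (received \<theta> K n (enc S n) w k z) \<noteq> w k}
     \<subseteq> (\<Union>w'\<in>{..<NN n} - {w k}. Bset n (w k) w')"
proof
  fix z assume z: "z \<in> {z \<in> space (noise n). dec S n k (received \<theta> K n (enc S n) w k z) \<noteq> w k}"
  let ?v = "dec S n k (received \<theta> K n (enc S n) w k z)"
  have v: "?v < NN n" "score n (w k) (received \<theta> K n (enc S n) w k z) \<le> score n ?v (received \<theta> K n (enc S n) w k z)"
    using dec_prop[OF k, of n "received \<theta> K n (enc S n) w k z"] wk by auto
  have "z \<in> Bset n (w k) ?v" using pair_incl[OF S k g _ v(2)] z by auto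
  then show "z \<in> (\<Union>w'\<in>{..<NN n} - {w k}. Bset n (w k) w')" using v(1) z by auto
qed

lemma err_bound:
  assumes S: "S \<subseteq> {..<K}" and k: "k \<in> S" and g: "good \<theta> S" and V: "validc n (NN n) (cb n)"
  shows "err_prob \<theta> K n (\<lambda>k. msg_size n (Rr S k)) (enc S n) (dec S n) k \<le> NN n * exp (- real (n div 8) / 4)"
proof -
  interpret N: prob_space "noise n" by (rule prob_space_noise)
  let ?M = "\<lambda>k. msg_size n (Rr S k)"
  let ?W = "PiE {..<K} (\<lambda>j. {..<?M j})"
  let ?E = "\<lambda>w. {z \<in> space (noise n). dec S n k (received \<theta> K n (enc S n) w k z) \<noteq> w k}"
  define \<epsilon> where "\<epsilon> = real (NN n) * exp (- real (n div 8) / 4)"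
  have Ew: "measure (noise n) (?E w) \<le> \<epsilon>" if w: "w \<in> ?W" for w
  proof -
    have kK: "k < K" using S k by auto
    have "w k < ?M k" using w kK by (auto simp: PiE_def Pi_def)
    then have wk: "w k < NN n" using k by (simp add: Rr_def)
    have "measure (noise n) (?E w) \<le> measure (noise n) (\<Union>w'\<in>{..<NN n} - {w k}. Bset n (w k) w')"
      by (rule N.finite_measure_mono[OF err_set_incl[where w=w and n=n, OF S k g wk]]) (rule sets.finite_UN; simp add: Bset_sets)
    also have "\<dots> \<le> (\<Sum>w'\<in>{..<NN n} - {w k}. measure (noise n) (Bset n (w k) w'))"
      by (rule measure_UNION_le) (simp_all add: Bset_sets)
    also have "\<dots> \<le> (\<Sum>w'\<in>{..<NN n} - {w k}. exp (- real (n div 8) / 4))"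
    proof (rule sum_mono)
      fix w' assume w': "w' \<in> {..<NN n} - {w k}"
      have "n div 8 \<le> ham n (cb n w') (cb n (w k))" using V w' wk by (auto simp: validc_def)
      then have "n div 8 \<le> card (Dset n (w k) w')" by (simp add: ham_def Dset_def)
      then have "exp (- real (card (Dset n (w k) w')) / 4) \<le> exp (- real (n div 8) / 4)" by simp
      then show "measure (noise n) (Bset n (w k) w') \<le> exp (- real (n div 8) / 4)"
        using Bset_measure[of n "w k" w'] by linarith
    qed
    also have "\<dots> \<le> \<epsilon>" unfolding \<epsilon>_def using wk by (simp add: card_Diff_singleton)
    finally show ?thesis .
  qed
  have cardW: "real (card ?W) = (\<Prod>j<K. real (?M j))"
    by (simp add: card_PiE)
  have pos: "0 < (\<Prod>j<K. real (?M j))" by (intro prod_pos) (simp add: msg_size_pos)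
  have "err_prob \<theta> K n ?M (enc S n) (dec S n) k = (\<Sum>w\<in>?W. measure (noise n) (?E w)) / (\<Prod>j<K. real (?M j))"
    by (simp add: err_prob_def)
  also have "\<dots> \<le> (\<Sum>w\<in>?W. \<epsilon>) / (\<Prod>j<K. real (?M j))"
    by (rule divide_right_mono[OF sum_mono]) (use Ew pos in auto)
  also have "\<dots> = \<epsilon>" using cardW pos by (simp del: of_nat_prod)
  finally show ?thesis unfolding \<epsilon>_def .
qed



lemma err_lim: "(\<lambda>n::nat. (2 powr (real n/64)+1) * exp (-(real n/8 - 1)/4)) \<longlonglongrightarrow> 0"
  by real_asymp
lemma e1: "eventually (\<lambda>K::nat. 2 \<le> ln (real K) / (8 * ln (ln (real K)))) sequentially" by real_asymp
lemma e2: "eventually (\<lambda>K::nat. ln (real K) / (8 * ln (ln (real K))) \<le> real K) sequentially" by real_asymp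
lemma e3: "eventually (\<lambda>K::nat. 2 * (ln (real K) / (8 * ln (ln (real K)))) * ln (8 * pi * (ln (real K) / (8 * ln (ln (real K))))) \<le> ln (real K) / 2) sequentially" by real_asymp
lemma e4: "(\<lambda>K::nat. (ln (real K) / (8 * ln (ln (real K)))) * exp ((ln (real K) / (8 * ln (ln (real K)))) * ln (real K)) * exp (-(real K - ln (real K) / (8 * ln (ln (real K)))) * exp (- ln (real K) / 2))) \<longlonglongrightarrow> 0" by real_asymp



lemma score_meas[measurable]: "score n w \<in> borel_measurable (PiM {..<n} (\<lambda>_. borel))"
  unfolding score_def by measurable

lemma dec_meas: "dec S n k \<in> measurable (PiM {..<n} (\<lambda>_. borel)) (count_space UNIV)"
proof (cases "k \<in> S")
  case True
  then have "dec S n k = (\<lambda>y. LEAST w. w < NN n \<and> (\<forall>w'<NN n. score n w' y \<le> score n w y))"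
    by (simp add: dec_def fun_eq_iff)
  also have "\<dots> \<in> measurable (PiM {..<n} (\<lambda>_. borel)) (count_space UNIV)"
  proof (rule measurable_Least)
    fix w
    let ?M = "PiM {..<n} (\<lambda>_. borel) :: (nat \<Rightarrow> complex) measure"
    have c: "{y\<in>space ?M. score n w' y \<le> score n w y} \<in> sets ?M" for w'
      by (rule borel_measurable_le[OF score_meas score_meas])
    have "{y\<in>space ?M. w < NN n \<and> (\<forall>w'<NN n. score n w' y \<le> score n w y)} \<in> sets ?M"
    proof (cases "w < NN n")
      case True
      then have "{y\<in>space ?M. w < NN n \<and> (\<forall>w'<NN n. score n w' y \<le> score n w y)}
          = (\<Inter>w'\<in>{..<NN n}. {y\<in>space ?M. score n w' y \<le> score n w y})" by auto
      also have "\<dots> \<in> sets ?M" using True by (intro sets.finite_INT c) auto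
      finally show ?thesis .
    qed simp
    then show "(\<lambda>y. w < NN n \<and> (\<forall>w'<NN n. score n w' y \<le> score n w y)) \<in> measurable ?M (count_space UNIV)"
      unfolding pred_def by assumption
  qed
  finally show ?thesis .
next
  case False
  then have "dec S n k = (\<lambda>y. 0)" by (simp add: dec_def fun_eq_iff)
  then show ?thesis by simp
qed

lemma is_code_ok: "is_code K n (\<lambda>k. msg_size n (Rr S k)) (enc S n) (dec S n)"
  unfolding is_code_def
proof (intro conjI allI impI)
  fix k w t
  show "(cmod (enc S n k w t))\<^sup>2 \<le> 1" by (cases "k\<in>S"; cases "cb n w t") (simp_all add: enc_def sgnb_def)
next
  fix k show "dec S n k \<in> measurable (PiM {..<n} (\<lambda>_. borel)) (count_space UNIV)" by (rule dec_meas)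
qed

lemma NN_le: "real (NN n) \<le> 2 powr (real n / 64) + 1"
proof -
  have "real (NN n) = real_of_int \<lceil>2 powr (real n * (1/64))\<rceil>"
    unfolding msg_size_def by (simp add: ceiling_le_zero)
  also have "\<dots> \<le> 2 powr (real n * (1/64)) + 1" by linarith
  finally show ?thesis by simp
qed

lemma div8_le: "real (n div 8) \<le> real n / 8"
proof -
  have "n div 8 * 8 \<le> n" by simp
  then have "real (n div 8 * 8) \<le> real n" by (simp only: of_nat_le_iff)
  then show ?thesis by simp
qed

lemma div8_ge: "real n / 8 - 1 \<le> real (n div 8)"
proof -
  have "n = n div 8 * 8 + n mod 8" by simp
  moreover have "n mod 8 < 8" by simp
  ultimately have "n \<le> n div 8 * 8 + 8" by linarith
  then have "real n \<le> real (n div 8 * 8 + 8)" by (simp only: of_nat_le_iff)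
  then show ?thesis by simp
qed

lemma V_bound:
  assumes n: "3 \<le> n"
  shows "real (NN n) * real (\<Sum>i<n div 8. n choose i) \<le> 2 ^ n"
proof -
  have a: "real (NN n) \<le> 2 powr (real n / 64 + 1)"
  proof -
    have "1 \<le> 2 powr (real n / 64)" by (rule ge_one_powr_ge_zero) auto
    then have "2 powr (real n / 64) + 1 \<le> 2 powr (real n / 64) * 2" by simp
    also have "\<dots> = 2 powr (real n / 64 + 1)" by (simp add: powr_add)
    finally show ?thesis using NN_le[of n] by simp
  qed
  have b1: "(8::real) ^ (n div 8) \<le> 2 powr (3 * real n / 8)"
  proof -
    have e: "(8::real) = 2 powr 3" by simp
    have "(8::real) ^ (n div 8) = (2 powr 3) powr real (n div 8)"
      by (subst e, subst powr_realpow) auto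
    also have "\<dots> = 2 powr (3 * real (n div 8))" by (simp only: powr_powr)
    also have "\<dots> \<le> 2 powr (3 * real n / 8)"
      using div8_le[of n] by (intro powr_mono) auto
    finally show ?thesis .
  qed
  have b2: "(9/8::real) ^ n \<le> 2 powr (real n / 4)"
  proof -
    have q: "(2 powr (1/4::real))^4 = 2"
    proof -
      have "(2 powr (1/4::real))^4 = (2 powr (1/4::real)) powr (real 4)" by (rule powr_realpow[symmetric]) simp
      also have "\<dots> = 2 powr (1/4 * real 4)" by (rule powr_powr)
      also have "\<dots> = 2" by simp
      finally show ?thesis .
    qed
    have "(9/8::real)^4 \<le> (2 powr (1/4::real))^4" unfolding q by (simp add: power_divide)
    then have "(9/8::real) \<le> 2 powr (1/4)" by (subst (asm) power_mono_iff) auto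
    then have "(9/8::real) ^ n \<le> (2 powr (1/4)) ^ n" by (intro power_mono) auto
    also have "\<dots> = (2 powr (1/4::real)) powr (real n)" by (rule powr_realpow[symmetric]) simp
    also have "\<dots> = 2 powr (1/4 * real n)" by (rule powr_powr)
    finally show ?thesis by simp
  qed
  have b: "real (\<Sum>i<n div 8. n choose i) \<le> 2 powr (3 * real n / 8) * 2 powr (real n / 4)"
  proof -
    have "real (\<Sum>i<n div 8. n choose i) \<le> 8 ^ (n div 8) * (9/8) ^ n" by (rule binom_tail)
    also have "\<dots> \<le> 2 powr (3 * real n / 8) * 2 powr (real n / 4)"
      using b1 b2 by (intro mult_mono) auto
    finally show ?thesis .
  qed
  have "real (NN n) * real (\<Sum>i<n div 8. n choose i) \<le> 2 powr (real n / 64 + 1) * (2 powr (3 * real n / 8) * 2 powr (real n / 4))"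
    using a b by (intro mult_mono) (auto intro: sum_nonneg)
  also have "\<dots> = 2 powr (real n / 64 + 1 + (3 * real n / 8 + real n / 4))" by (simp only: powr_add)
  also have "\<dots> \<le> 2 powr (real n)" using n by (intro powr_mono) auto
  also have "\<dots> = 2 ^ n" by (simp add: powr_realpow)
  finally show ?thesis .
qed


lemma valid_large:
  assumes n: "8 \<le> n" shows "validc n (NN n) (cb n)"
proof -
  let ?d = "n div 8"
  let ?V = "\<Sum>i<n div 8. n choose i"
  have d: "0 < ?d" using n by simp
  have "?V = (n choose 0) + (\<Sum>i\<in>{..<?d}-{0}. n choose i)" using d by (intro sum.remove) auto
  then have V1: "1 \<le> ?V" by simp
  have "real (NN n * ?V) \<le> real (2 ^ n)" using V_bound[of n] n by simp
  then have NV: "NN n * ?V \<le> 2 ^ n" by (simp only: of_nat_le_iff)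
  obtain C where C: "C \<subseteq> UU n" "card C = NN n" "\<forall>a\<in>C. \<forall>b\<in>C. a \<noteq> b \<longrightarrow> ?d \<le> ham n a b"
    using GV[OF NV V1 ball_card d] by blast
  have fC: "finite C" using C(1) finite_UU finite_subset by blast
  obtain h where h: "bij_betw h {0..<card C} C" using ex_bij_betw_nat_finite[OF fC] by blast
  have "validc n (NN n) h"
    unfolding validc_def
  proof (intro allI impI)
    fix w w' assume w: "w < NN n" "w' < NN n" "w \<noteq> w'"
    then have "h w \<in> C" "h w' \<in> C" "h w \<noteq> h w'"
      using h C(2) by (auto simp: bij_betw_def inj_on_def)
    then show "?d \<le> ham n (h w) (h w')" using C(3) by blast
  qed
  then show ?thesis by (rule cb_valid)
qed

lemma err_prob_nonneg: "0 \<le> err_prob \<theta> K n M e d k"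
  unfolding err_prob_def by (intro divide_nonneg_nonneg sum_nonneg prod_nonneg) auto

lemma err_zero:
  assumes "k \<notin> S" and kK: "k < K"
  shows "err_prob \<theta> K n (\<lambda>k. msg_size n (Rr S k)) (enc S n) (dec S n) k = 0"
proof -
  have "measure (noise n) {z \<in> space (noise n). dec S n k (received \<theta> K n (enc S n) w k z) \<noteq> w k} = 0"
    if w: "w \<in> PiE {..<K} (\<lambda>j. {..<msg_size n (Rr S j)})" for w
  proof -
    have "w k < msg_size n (Rr S k)" using w kK by (auto simp: PiE_def Pi_def)
    then have "w k = 0" using assms by (simp add: Rr_def msg_size_0)
    then show ?thesis using assms by (simp add: dec_def)
  qed
  then show ?thesis unfolding err_prob_def by simp
qed


lemma err_tendsto:
  assumes S: "S \<subseteq> {..<K}" and g: "good \<theta> S" and kK: "k < K"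
  shows "(\<lambda>n. err_prob \<theta> K n (\<lambda>k. msg_size n (Rr S k)) (enc S n) (dec S n) k) \<longlonglongrightarrow> 0"
proof (cases "k \<in> S")
  case False
  then show ?thesis using err_zero[OF False kK] by simp
next
  case True
  let ?e = "\<lambda>n. err_prob \<theta> K n (\<lambda>k. msg_size n (Rr S k)) (enc S n) (dec S n) k"
  let ?h = "\<lambda>n::nat. (2 powr (real n/64)+1) * exp (-(real n/8 - 1)/4)"
  have ev: "eventually (\<lambda>n. ?e n \<le> ?h n) sequentially"
    using eventually_ge_at_top[of 8]
  proof eventually_elim
    case (elim n)
    have "?e n \<le> NN n * exp (- real (n div 8) / 4)"
      by (rule err_bound[OF S True g valid_large[OF elim]])
    also have "\<dots> \<le> ?h n"
    proof (rule mult_mono)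
      show "real (NN n) \<le> 2 powr (real n / 64) + 1" by (rule NN_le)
      show "exp (- real (n div 8) / 4) \<le> exp (-(real n/8 - 1)/4)" using div8_ge[of n] by simp
    qed auto
    finally show ?case .
  qed
  show ?thesis
    by (rule tendsto_sandwich[OF _ ev tendsto_const err_lim]) (simp add: err_prob_nonneg)
qed

lemma achievable:
  assumes S: "S \<subseteq> {..<K}" and g: "good \<theta> S"
  shows "achievable_sum_rate \<theta> K (real (card S) / 64)"
  unfolding achievable_sum_rate_def
proof (intro exI conjI)
  show "achievable_rates \<theta> K (Rr S)"
    unfolding achievable_rates_def
  proof (intro conjI exI allI impI)
    show "\<And>k. k < K \<Longrightarrow> 0 \<le> Rr S k" by (simp add: Rr_def)
    show "\<And>n. is_code K n (\<lambda>k. msg_size n (Rr S k)) (enc S n) (dec S n)" by (rule is_code_ok)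
    show "\<And>k. k < K \<Longrightarrow> (\<lambda>n. err_prob \<theta> K n (\<lambda>k. msg_size n (Rr S k)) (enc S n) (dec S n) k) \<longlonglongrightarrow> 0"
      by (rule err_tendsto[OF S g])
  qed
  have "(\<Sum>k<K. Rr S k) = (\<Sum>k\<in>S. 1/64)"
    unfolding Rr_def using S by (subst sum.If_cases) (auto simp: Int_absorb1)
  then show "(\<Sum>k<K. Rr S k) = real (card S) / 64" by simp
qed




abbreviation M0 :: "real measure" where "M0 \<equiv> uniform_measure lborel {-pi..<pi}"

lemma prob_M0: "prob_space M0"
proof (rule prob_space_uniform_measure)
  have e: "emeasure lborel {-pi..<pi} = ennreal (2 * pi)" using pi_gt_zero by simp
  have "\<not> pi \<le> 0" using pi_gt_zero by linarith
  then show "emeasure lborel {-pi..<pi} \<noteq> 0" "emeasure lborel {-pi..<pi} \<noteq> \<infinity>"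
    using e by (simp_all add: ennreal_eq_0_iff)
qed

lemma sets_M0[simp, measurable_cong]: "sets M0 = sets borel" by simp

lemma measure_M0_Icc:
  assumes "-pi \<le> a" "a \<le> b" "b < pi"
  shows "measure M0 {a..b} = (b - a) / (2 * pi)"
proof -
  have "emeasure M0 {a..b} = emeasure lborel ({-pi..<pi} \<inter> {a..b}) / emeasure lborel {-pi..<pi}"
    by simp
  also have "{-pi..<pi} \<inter> {a..b} = {a..b}" using assms by auto
  also have "emeasure lborel {a..b} / emeasure lborel {-pi..<pi} = ennreal ((b - a) / (2 * pi))"
    using assms by (simp add: divide_ennreal[symmetric])
  finally have "emeasure M0 {a..b} = ennreal ((b - a) / (2 * pi))" .
  then show ?thesis
    using assms by (simp add: measure_def)
qed

lemma prob_PM: "prob_space (phase_measure K)"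
  unfolding phase_measure_def by (rule prob_space_PiM) (rule prob_M0)

lemma space_PM: "space (phase_measure K) = PiE ({..<K} \<times> {..<K}) (\<lambda>_. UNIV)"
  by (simp add: phase_measure_def space_PiM)

lemma indep_coords:
  assumes K: "0 < K"
  shows "prob_space.indep_vars (phase_measure K) (\<lambda>_. M0) (\<lambda>c \<theta>. \<theta> c) ({..<K} \<times> {..<K})"
proof -
  interpret P: prob_space "phase_measure K" by (rule prob_PM)
  let ?I = "{..<K} \<times> {..<K}"
  have ne: "?I \<noteq> {}" using K by auto
  have rv: "(\<lambda>\<theta>. \<theta> c) \<in> measurable (phase_measure K) M0" if "c \<in> ?I" for c
    unfolding phase_measure_def using measurable_component_singleton[OF that, of "\<lambda>_. M0"] by simp
  show ?thesis
  proof (subst P.indep_vars_iff_distr_eq_PiM)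
    show "?I \<noteq> {}" by (fact ne)
    fix c :: "nat \<times> nat" show "(\<lambda>\<theta>. \<theta> c) \<in> measurable (phase_measure K) M0"
    proof (cases "c \<in> ?I")
      case True then show ?thesis by (rule rv)
    next
      case False
      have "(\<lambda>\<theta>. \<theta> c) \<in> measurable (phase_measure K) M0 \<longleftrightarrow> (\<lambda>_. undefined) \<in> measurable (phase_measure K) M0"
        by (rule measurable_cong) (use False in \<open>auto simp: space_PM intro: PiE_arb\<close>)
      then show ?thesis by simp
    qed
  next
    show "distr (phase_measure K) (Pi\<^sub>M ?I (\<lambda>_. M0)) (\<lambda>x. \<lambda>i\<in>?I. x i) = Pi\<^sub>M ?I (\<lambda>i. distr (phase_measure K) M0 (\<lambda>\<theta>. \<theta> i))"
    proof -
      have "distr (phase_measure K) (Pi\<^sub>M ?I (\<lambda>_. M0)) (\<lambda>x. \<lambda>i\<in>?I. x i) = distr (phase_measure K) (Pi\<^sub>M ?I (\<lambda>_. M0)) (\<lambda>x. x)"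
        by (rule distr_cong) (auto simp: space_PM PiE_def extensional_def fun_eq_iff)
      also have "\<dots> = phase_measure K" unfolding phase_measure_def by (rule distr_id)
      also have "\<dots> = Pi\<^sub>M ?I (\<lambda>i. distr (phase_measure K) M0 (\<lambda>\<theta>. \<theta> i))"
        unfolding phase_measure_def
        by (rule PiM_cong) (auto intro!: distr_PiM_component[symmetric] prob_M0)
      finally show ?thesis .
    qed
  qed
qed


lemma measure_box:
  assumes J: "J \<subseteq> {..<K} \<times> {..<K}" "finite J" and A: "\<And>c. A c \<in> sets borel"
  shows "measure (phase_measure K) {\<theta> \<in> space (phase_measure K). \<forall>c\<in>J. \<theta> c \<in> A c} = (\<Prod>c\<in>J. measure M0 (A c))"
proof -
  interpret M0: prob_space M0 by (rule prob_M0)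
  interpret P: prob_space "phase_measure K" by (rule prob_PM)
  have eq: "{\<theta> \<in> space (phase_measure K). \<forall>c\<in>J. \<theta> c \<in> A c} = prod_emb ({..<K} \<times> {..<K}) (\<lambda>_. M0) J (PiE J A)"
    unfolding prod_emb_def phase_measure_def by (auto simp: space_PiM)
  have "emeasure (phase_measure K) {\<theta> \<in> space (phase_measure K). \<forall>c\<in>J. \<theta> c \<in> A c} = (\<Prod>c\<in>J. emeasure M0 (A c))"
    unfolding eq unfolding phase_measure_def
    by (rule emeasure_PiM_emb) (use J A prob_M0 in auto)
  also have "\<dots> = ennreal (\<Prod>c\<in>J. measure M0 (A c))"
    by (simp add: M0.emeasure_eq_measure prod_ennreal)
  finally show ?thesis
    by (simp add: P.emeasure_eq_measure prod_nonneg)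
qed

lemma indep_fail:
  assumes K: "0 < K" and U: "finite U" "U \<noteq> {}" and J: "\<And>u. u \<in> U \<Longrightarrow> J u \<subseteq> {..<K} \<times> {..<K}"
    and Jf: "\<And>u. u \<in> U \<Longrightarrow> finite (J u)" and dj: "disjoint_family_on J U"
    and A: "\<And>c. A c \<in> sets borel"
  shows "measure (phase_measure K) {\<theta> \<in> space (phase_measure K). \<forall>u\<in>U. \<not> (\<forall>c\<in>J u. \<theta> c \<in> A c)}
    = (\<Prod>u\<in>U. 1 - (\<Prod>c\<in>J u. measure M0 (A c)))"
proof -
  interpret P: prob_space "phase_measure K" by (rule prob_PM)
  let ?X = "\<lambda>u \<theta>. restrict (\<lambda>c. \<theta> c) (J u)"
  let ?B = "\<lambda>u. space (PiM (J u) (\<lambda>_. M0)) - PiE (J u) A"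
  have ind: "P.indep_vars (\<lambda>u. PiM (J u) (\<lambda>_. M0)) ?X U"
    by (rule P.indep_vars_restrict[OF indep_coords[OF K] J dj])
  have B: "?B u \<in> sets (PiM (J u) (\<lambda>_. M0))" if "u \<in> U" for u
    using Jf[OF that] A by (intro sets.Diff sets.top sets_PiM_I_finite) auto
  have "P.prob (\<Inter>u\<in>U. ?X u -` ?B u \<inter> space (phase_measure K)) = (\<Prod>u\<in>U. P.prob (?X u -` ?B u \<inter> space (phase_measure K)))"
    by (rule P.indep_varsD_finite[OF ind U(2) U(1) B])
  moreover have "(\<Inter>u\<in>U. ?X u -` ?B u \<inter> space (phase_measure K)) = {\<theta> \<in> space (phase_measure K). \<forall>u\<in>U. \<not> (\<forall>c\<in>J u. \<theta> c \<in> A c)}"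
    using U(2) by (auto simp: space_PiM PiE_iff)
  moreover have "P.prob (?X u -` ?B u \<inter> space (phase_measure K)) = 1 - (\<Prod>c\<in>J u. measure M0 (A c))" if u: "u \<in> U" for u
  proof -
    have "?X u -` ?B u \<inter> space (phase_measure K) = space (phase_measure K) - {\<theta> \<in> space (phase_measure K). \<forall>c\<in>J u. \<theta> c \<in> A c}"
      by (auto simp: space_PiM PiE_iff)
    moreover have "{\<theta> \<in> space (phase_measure K). \<forall>c\<in>J u. \<theta> c \<in> A c} \<in> P.events"
    proof -
      have "{\<theta> \<in> space (phase_measure K). \<forall>c\<in>J u. \<theta> c \<in> A c} = prod_emb ({..<K} \<times> {..<K}) (\<lambda>_. M0) (J u) (PiE (J u) A)"
        unfolding prod_emb_def phase_measure_def by (auto simp: space_PiM)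
      also have "\<dots> \<in> sets (phase_measure K)"
        unfolding phase_measure_def using J[OF u] Jf[OF u] A by (intro sets_PiM_I) auto
      finally show ?thesis .
    qed
    ultimately show ?thesis using measure_box[OF J[OF u] Jf[OF u] A] by (simp add: P.prob_compl)
  qed
  ultimately show ?thesis by simp
qed


definition Aint :: "real \<Rightarrow> nat \<times> nat \<Rightarrow> real set" where
  "Aint \<eta> c = (if fst c = snd c then {0..1/2} else {pi/2 - \<eta>..pi/2})"

definition Ju :: "nat list \<Rightarrow> nat \<Rightarrow> (nat \<times> nat) set" where
  "Ju h u = insert (u,u) ((\<lambda>l. (u,l)) ` set h \<union> (\<lambda>l. (l,u)) ` set h)"

definition compat :: "real \<Rightarrow> (nat \<times> nat \<Rightarrow> real) \<Rightarrow> nat list \<Rightarrow> nat \<Rightarrow> bool" where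
  "compat \<eta> \<theta> h u \<longleftrightarrow> (\<forall>c\<in>Ju h u. \<theta> c \<in> Aint \<eta> c)"

definition good' :: "real \<Rightarrow> (nat \<times> nat \<Rightarrow> real) \<Rightarrow> nat set \<Rightarrow> bool" where
  "good' \<eta> \<theta> S \<longleftrightarrow> (\<forall>k\<in>S. \<forall>j\<in>S. \<theta> (k,j) \<in> Aint \<eta> (k,j))"

lemma build:
  assumes ext: "\<And>h. length h < m \<Longrightarrow> set h \<subseteq> {..<K} \<Longrightarrow> \<exists>u<K. u \<notin> set h \<and> compat \<eta> \<theta> h u"
  shows "i \<le> m \<Longrightarrow> \<exists>h. length h = i \<and> distinct h \<and> set h \<subseteq> {..<K} \<and> good' \<eta> \<theta> (set h)"
proof (induction i)
  case 0 then show ?case by (intro exI[of _ "[]"]) (simp add: good'_def)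
next
  case (Suc i)
  then obtain h where h: "length h = i" "distinct h" "set h \<subseteq> {..<K}" "good' \<eta> \<theta> (set h)" by auto
  obtain u where u: "u < K" "u \<notin> set h" "compat \<eta> \<theta> h u"
    using ext[of h] h Suc.prems by auto
  have "good' \<eta> \<theta> (set (u # h))"
    using h(4) u(3) unfolding good'_def compat_def Ju_def by auto
  then show ?case using h u by (intro exI[of _ "u # h"]) auto
qed

lemma pred_coord:
  assumes "B \<in> sets borel"
  shows "{\<theta> \<in> space (phase_measure K). \<theta> c \<in> B} \<in> sets (phase_measure K)"
proof (cases "c \<in> {..<K} \<times> {..<K}")
  case True
  then have "(\<lambda>\<theta>. \<theta> c) \<in> measurable (phase_measure K) borel"
    unfolding phase_measure_def using measurable_component_singleton[OF True, of "\<lambda>_. M0"] by simp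
  then have "(\<lambda>\<theta>. \<theta> c) -` B \<inter> space (phase_measure K) \<in> sets (phase_measure K)"
    using assms by (rule measurable_sets)
  moreover have "(\<lambda>\<theta>. \<theta> c) -` B \<inter> space (phase_measure K) = {\<theta> \<in> space (phase_measure K). \<theta> c \<in> B}" by auto
  ultimately show ?thesis by simp
next
  case False
  have u: "\<theta> c = undefined" if "\<theta> \<in> space (phase_measure K)" for \<theta>
    using that False by (auto simp: space_PM intro: PiE_arb)
  have u': "\<theta> c \<in> B \<longleftrightarrow> undefined \<in> B" if "\<theta> \<in> space (phase_measure K)" for \<theta>
    using u[OF that] by simp
  have "{\<theta> \<in> space (phase_measure K). \<theta> c \<in> B} = (if undefined \<in> B then space (phase_measure K) else {})"
    using u' by auto
  then show ?thesis by simp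
qed

lemma sets_Aint[simp]: "Aint \<eta> c \<in> sets borel" by (simp add: Aint_def)

lemma E_sets:
  fixes U :: "nat set" and J :: "nat \<Rightarrow> (nat \<times> nat) set"
  assumes "\<And>c. A c \<in> sets borel"
  shows "{\<theta> \<in> space (phase_measure K). \<forall>u\<in>U. \<not> (\<forall>c\<in>J u. \<theta> c \<in> A c)} \<in> sets (phase_measure K)"
  by (intro sets.sets_Collect_countable_Ball sets.sets_Collect_neg pred_coord assms)

definition Aset :: "nat \<Rightarrow> nat \<Rightarrow> real \<Rightarrow> (nat \<times> nat \<Rightarrow> real) set" where
  "Aset K m \<eta> = {\<theta> \<in> space (phase_measure K). \<exists>h. length h = m \<and> distinct h \<and> set h \<subseteq> {..<K} \<and> good' \<eta> \<theta> (set h)}"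

lemma Aset_sets: "Aset K m \<eta> \<in> sets (phase_measure K)"
  unfolding Aset_def good'_def
  by (intro sets.sets_Collect_countable_Ex sets.sets_Collect_conj sets.sets_Collect_const
        sets.sets_Collect_countable_Ball pred_coord sets_Aint)


lemma card_Ju: "card (Ju h u) \<le> 1 + 2 * length h"
proof -
  have "card (Ju h u) \<le> Suc (card ((\<lambda>l. (u,l)) ` set h \<union> (\<lambda>l. (l,u)) ` set h))"
    unfolding Ju_def by (rule card_insert_le_m1) auto
  also have "card ((\<lambda>l. (u,l)) ` set h \<union> (\<lambda>l. (l,u)) ` set h) \<le> card ((\<lambda>l. (u,l)) ` set h) + card ((\<lambda>l. (l,u)) ` set h)"
    by (rule card_Un_le)
  also have "card ((\<lambda>l. (u,l)) ` set h) \<le> length h"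
    using card_image_le[of "set h" "\<lambda>l. (u,l)"] card_length[of h] by simp
  also have "card ((\<lambda>l. (l,u)) ` set h) \<le> length h"
    using card_image_le[of "set h" "\<lambda>l. (l,u)"] card_length[of h] by simp
  finally show ?thesis by simp
qed

lemma measure_Aint:
  assumes "0 < \<eta>" "\<eta> \<le> 1/4"
  shows "\<eta> / (2*pi) \<le> measure M0 (Aint \<eta> c)"
proof (cases "fst c = snd c")
  case True
  then have e: "Aint \<eta> c = {0..1/2}" by (simp add: Aint_def)
  have "measure M0 (Aint \<eta> c) = (1/2 - 0) / (2*pi)"
    unfolding e using pi_gt3 by (intro measure_M0_Icc) auto
  moreover have "\<eta> / (2*pi) \<le> (1/2 - 0) / (2*pi)" using assms pi_gt_zero by (intro divide_right_mono) auto
  ultimately show ?thesis by linarith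
next
  case False
  then have e: "Aint \<eta> c = {pi/2 - \<eta>..pi/2}" by (simp add: Aint_def)
  have "measure M0 (Aint \<eta> c) = (pi/2 - (pi/2 - \<eta>)) / (2*pi)"
    unfolding e using assms pi_gt3 by (intro measure_M0_Icc) auto
  then show ?thesis by simp
qed

lemma fail_bound:
  assumes K: "0 < K" and m: "1 \<le> m" "m \<le> K" and \<eta>: "0 < \<eta>" "\<eta> \<le> 1/4"
  shows "measure (phase_measure K) (space (phase_measure K) - Aset K m \<eta>)
           \<le> real m * real K ^ m * (1 - (\<eta> / (2*pi)) ^ (2*m)) ^ (K - m)"
proof -
  interpret P: prob_space "phase_measure K" by (rule prob_PM)
  interpret M0: prob_space M0 by (rule prob_M0)
  define p where "p = \<eta> / (2*pi)"
  define q where "q = p ^ (2*m)"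
  have p01: "0 < p" "p \<le> 1" unfolding p_def using \<eta> pi_gt3 by (auto simp: field_simps)
  have q01: "0 \<le> q" "q \<le> 1" unfolding q_def using p01 by (auto simp: power_le_one)
  define L where "L = {h. set h \<subseteq> {..<K} \<and> length h < m}"
  define E where "E h = {\<theta> \<in> space (phase_measure K). \<forall>u\<in>{..<K} - set h. \<not> (\<forall>c\<in>Ju h u. \<theta> c \<in> Aint \<eta> c)}" for h
  have finL: "finite L"
    by (rule finite_subset[OF _ finite_lists_length_le[of "{..<K}" m]]) (auto simp: L_def)
  have Esets: "E h \<in> sets (phase_measure K)" for h
    unfolding E_def by (rule E_sets) simp
  have incl: "space (phase_measure K) - Aset K m \<eta> \<subseteq> (\<Union>h\<in>L. E h)"
  proof
    fix \<theta> assume th: "\<theta> \<in> space (phase_measure K) - Aset K m \<eta>"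
    show "\<theta> \<in> (\<Union>h\<in>L. E h)"
    proof (rule ccontr)
      assume "\<theta> \<notin> (\<Union>h\<in>L. E h)"
      then have ext: "\<exists>u<K. u \<notin> set h \<and> compat \<eta> \<theta> h u" if "length h < m" "set h \<subseteq> {..<K}" for h
        using that th by (auto simp: L_def E_def compat_def)
      obtain h where "length h = m \<and> distinct h \<and> set h \<subseteq> {..<K} \<and> good' \<eta> \<theta> (set h)"
        using build[of m K \<eta> \<theta> m, OF ext] by auto
      then have "\<theta> \<in> Aset K m \<eta>" using th by (auto simp: Aset_def)
      then show False using th by simp
    qed
  qed
  have Eb: "measure (phase_measure K) (E h) \<le> (1 - q) ^ (K - m)" if h: "h \<in> L" for h
  proof -
    let ?U = "{..<K} - set h"
    have lh: "length h < m" "set h \<subseteq> {..<K}" using h by (auto simp: L_def)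
    have cU: "K - m \<le> card ?U"
    proof -
      have "card ?U = K - card (set h)" using lh(2) by (simp add: card_Diff_subset)
      moreover have "card (set h) \<le> length h" by (rule card_length)
      ultimately show ?thesis using lh(1) by linarith
    qed
    show ?thesis
    proof (cases "?U = {}")
      case True
      then have "{..<K} \<subseteq> set h" by auto
      then have "K \<le> card (set h)" using card_mono[of "set h" "{..<K}"] by simp
      then have "K - m = 0" using card_length[of h] lh(1) by simp
      then show ?thesis by simp
    next
      case False
      have dj: "disjoint_family_on (Ju h) ?U"
        unfolding disjoint_family_on_def Ju_def by auto
      have "measure (phase_measure K) (E h) = (\<Prod>u\<in>?U. 1 - (\<Prod>c\<in>Ju h u. measure M0 (Aint \<eta> c)))"
        unfolding E_def
        by (rule indep_fail[OF K _ False _ _ dj]) (use lh(2) in \<open>auto simp: Ju_def\<close>)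
      also have "\<dots> \<le> (\<Prod>u\<in>?U. 1 - q)"
      proof (rule prod_mono)
        fix u assume u: "u \<in> ?U"
        have le1: "(\<Prod>c\<in>Ju h u. measure M0 (Aint \<eta> c)) \<le> 1"
          by (rule prod_le_1) (blast intro: measure_nonneg M0.prob_le_1)
        have "q \<le> p ^ card (Ju h u)"
        proof -
          have "card (Ju h u) \<le> 2 * m" using card_Ju[of h u] lh(1) by linarith
          then show ?thesis unfolding q_def using p01 by (intro power_decreasing) auto
        qed
        also have "p ^ card (Ju h u) = (\<Prod>c\<in>Ju h u. p)" by simp
        also have "\<dots> \<le> (\<Prod>c\<in>Ju h u. measure M0 (Aint \<eta> c))"
          using measure_Aint[OF \<eta>] p01 unfolding p_def by (intro prod_mono) auto
        finally show "0 \<le> 1 - (\<Prod>c\<in>Ju h u. measure M0 (Aint \<eta> c)) \<and> 1 - (\<Prod>c\<in>Ju h u. measure M0 (Aint \<eta> c)) \<le> 1 - q"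
          using le1 by simp
      qed
      also have "\<dots> = (1 - q) ^ card ?U" by simp
      also have "\<dots> \<le> (1 - q) ^ (K - m)"
        using q01 cU by (intro power_decreasing) auto
      finally show ?thesis .
    qed
  qed
  have cardL: "real (card L) \<le> real m * real K ^ m"
  proof -
    have "L = (\<Union>i<m. {h. set h \<subseteq> {..<K} \<and> length h = i})" by (auto simp: L_def)
    then have "card L \<le> (\<Sum>i<m. card {h. set h \<subseteq> {..<K} \<and> length h = i})"
      by (simp add: card_UN_le)
    also have "\<dots> = (\<Sum>i<m. K ^ i)" by (simp add: card_lists_length_eq)
    also have "\<dots> \<le> (\<Sum>i<m. K ^ m)" using K by (intro sum_mono power_increasing) auto
    also have "\<dots> = m * K ^ m" by simp
    finally have "card L \<le> m * K ^ m" .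
    then show ?thesis by (metis of_nat_le_iff of_nat_mult of_nat_power)
  qed
  have "measure (phase_measure K) (space (phase_measure K) - Aset K m \<eta>) \<le> measure (phase_measure K) (\<Union>h\<in>L. E h)"
    by (rule P.finite_measure_mono[OF incl]) (use finL Esets in auto)
  also have "\<dots> \<le> (\<Sum>h\<in>L. measure (phase_measure K) (E h))"
    by (rule measure_UNION_le[OF finL]) (rule Esets)
  also have "\<dots> \<le> (\<Sum>h\<in>L. (1 - q) ^ (K - m))" by (rule sum_mono) (rule Eb)
  also have "\<dots> = real (card L) * (1 - q) ^ (K - m)" by simp
  also have "\<dots> \<le> real m * real K ^ m * (1 - q) ^ (K - m)"
    using cardL q01 by (intro mult_right_mono) auto
  finally show ?thesis unfolding q_def p_def .
qed




lemma cos_half: "3/4 \<le> cos (1/2::real)"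
proof -
  have "cos (1/2::real) = cos (2 * (1/4))" by simp
  also have "\<dots> = (cos (1/4))\<^sup>2 - (sin (1/4))\<^sup>2" by (rule cos_double)
  also have "\<dots> = 1 - 2 * (sin (1/4::real))\<^sup>2" by (simp add: cos_squared_eq)
  finally have e: "cos (1/2::real) = 1 - 2 * (sin (1/4))\<^sup>2" .
  have "sin (1/4::real) \<le> 1/4" by (rule sin_x_le_x) simp
  moreover have "0 \<le> sin (1/4::real)" using pi_gt3 by (intro sin_ge_zero) auto
  ultimately have "(sin (1/4::real))\<^sup>2 \<le> (1/4)\<^sup>2" by (intro power_mono) auto
  then show ?thesis unfolding e by (simp add: power2_eq_square)
qed

lemma cos_diag: "x \<in> {0..1/2} \<Longrightarrow> 3/4 \<le> cos (x::real)"
  using cos_monotone_0_pi_le[of x "1/2"] cos_half pi_gt3 by auto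

lemma cos_off: assumes "x \<in> {pi/2 - \<eta>..pi/2}" "\<eta> \<le> 1" shows "\<bar>cos x\<bar> \<le> \<eta>"
proof -
  have "cos x = sin (pi/2 - x)" by (simp add: cos_sin_eq)
  moreover have "0 \<le> sin (pi/2 - x)" using assms pi_gt3 by (intro sin_ge_zero) auto
  moreover have "sin (pi/2 - x) \<le> pi/2 - x" using assms by (intro sin_x_le_x) auto
  ultimately show ?thesis using assms by auto
qed

lemma good'_good:
  assumes m: "1 \<le> m" and S: "finite S" "card S \<le> m" and g: "good' (1/(4*real m)) \<theta> S"
  shows "good \<theta> S"
  unfolding good_def
proof (intro ballI conjI)
  fix k assume k: "k \<in> S"
  have "\<theta> (k,k) \<in> Aint (1/(4*real m)) (k,k)" using g k unfolding good'_def by blast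
  then have "\<theta> (k,k) \<in> {0..1/2}" by (simp add: Aint_def)
  then show "3/4 \<le> cos (\<theta> (k,k))" by (rule cos_diag)
  have "(\<Sum>j\<in>S-{k}. \<bar>cos (\<theta> (k,j))\<bar>) \<le> (\<Sum>j\<in>S-{k}. 1/(4*real m))"
  proof (rule sum_mono)
    fix j assume j: "j \<in> S - {k}"
    then have "\<theta> (k,j) \<in> Aint (1/(4*real m)) (k,j)" using g k unfolding good'_def by blast
    then have "\<theta> (k,j) \<in> {pi/2 - 1/(4*real m)..pi/2}" using j by (simp add: Aint_def)
    then show "\<bar>cos (\<theta> (k,j))\<bar> \<le> 1/(4*real m)" by (rule cos_off) (use m in simp)
  qed
  also have "\<dots> = real (card S - 1) / (4 * real m)" using k S by (simp add: card_Diff_singleton)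
  also have "\<dots> \<le> 1/4"
  proof -
    have "real (card S - 1) \<le> real m" using S by simp
    then show ?thesis using m by (simp add: field_simps)
  qed
  finally show "(\<Sum>j\<in>S-{k}. \<bar>cos (\<theta> (k,j))\<bar>) \<le> 1/4" .
qed

lemma q_bound:
  assumes m: "1 \<le> m" and mt: "real m \<le> t" and E3: "2 * t * ln (8 * pi * t) \<le> x / 2"
  shows "exp (- x / 2) \<le> (1/(4*real m) / (2*pi)) ^ (2*m)"
proof -
  have pos: "0 < 8 * pi * real m" using m pi_gt_zero by simp
  have "(1/(4*real m) / (2*pi)) ^ (2*m) = inverse (8 * pi * real m) ^ (2*m)"
    by (simp add: field_simps)
  also have "\<dots> = exp (- ln (8 * pi * real m)) ^ (2*m)"
    using pos by (simp add: exp_minus)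
  also have "\<dots> = exp (real (2*m) * (- ln (8 * pi * real m)))"
    by (rule exp_of_nat_mult[symmetric])
  finally have e: "(1/(4*real m) / (2*pi)) ^ (2*m) = exp (- (2 * real m * ln (8 * pi * real m)))" by simp
  have "1 * 1 \<le> (8 * pi) * real m" using m pi_gt3 by (intro mult_mono) auto
  then have l0: "0 \<le> ln (8 * pi * real m)" by (intro ln_ge_zero) simp
  have "2 * real m * ln (8 * pi * real m) \<le> 2 * t * ln (8 * pi * t)"
  proof (intro mult_mono)
    have "0 < t" using mt m by simp
    then have "0 < 8 * pi * t" using pi_gt_zero by simp
    then show "ln (8 * pi * real m) \<le> ln (8 * pi * t)" using mt pos pi_gt_zero by (subst ln_le_cancel_iff) auto
  qed (use mt l0 in auto)
  then show ?thesis unfolding e using E3 by simp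
qed


lemma chain:
  assumes m: "1 \<le> m" and mt: "real m \<le> t" and tK: "t \<le> real K" and mK: "m \<le> K"
    and E3: "2 * t * ln (8 * pi * t) \<le> ln (real K) / 2"
  shows "real m * real K ^ m * (1 - (1/(4*real m)/(2*pi)) ^ (2*m)) ^ (K - m)
     \<le> t * exp (t * ln (real K)) * exp (-(real K - t) * exp (- ln (real K) / 2))"
proof -
  define q where "q = (1/(4*real m)/(2*pi)) ^ (2*m)"
  define e where "e = exp (- ln (real K) / 2)"
  have K: "0 < K" using m mK by simp
  have qe: "e \<le> q" unfolding q_def e_def by (rule q_bound[OF m mt E3])
  have q0: "0 \<le> q" unfolding q_def by simp
  have "1 * 1 \<le> (8 * pi) * real m" using m pi_gt3 by (intro mult_mono) auto
  then have "1/(4*real m)/(2*pi) \<le> 1" using pi_gt_zero m by (simp add: field_simps)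
  then have q1: "q \<le> 1" unfolding q_def by (intro power_le_one) auto
  have lnK: "0 \<le> ln (real K)" using K by simp
  have a: "real K ^ m \<le> exp (t * ln (real K))"
  proof -
    have "real K ^ m = exp (ln (real K)) ^ m" using K by simp
    also have "\<dots> = exp (real m * ln (real K))" by (rule exp_of_nat_mult[symmetric])
    also have "\<dots> \<le> exp (t * ln (real K))" using mt lnK by (simp add: mult_right_mono)
    finally show ?thesis .
  qed
  have b: "(1 - q) ^ (K - m) \<le> exp (-(real K - t) * e)"
  proof -
    have "(1 - q) ^ (K - m) \<le> exp (- q) ^ (K - m)"
      using q1 exp_ge_add_one_self[of "-q"] by (intro power_mono) auto
    also have "\<dots> = exp (real (K - m) * (- q))" by (rule exp_of_nat_mult[symmetric])
    also have "\<dots> \<le> exp (-(real K - t) * e)"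
    proof -
      have "(real K - t) * e \<le> real (K - m) * q"
        using mt tK mK qe by (intro mult_mono) (auto simp: e_def of_nat_diff)
      moreover have "-(real K - t) * e = - ((real K - t) * e)" by (simp only: mult_minus_left)
      ultimately have "-(real K - t) * e \<ge> real (K - m) * (- q)" by linarith
      then show ?thesis by simp
    qed
    finally show ?thesis .
  qed
  have "real m * real K ^ m * (1 - q) ^ (K - m) \<le> t * exp (t * ln (real K)) * exp (-(real K - t) * e)"
    using mt a b q1 by (intro mult_mono) auto
  then show ?thesis unfolding q_def e_def .
qed


theorem theorem1:
  shows "\<exists>c > 0. \<exists>A :: nat \<Rightarrow> (nat \<times> nat \<Rightarrow> real) set.
           (\<forall>K. A K \<in> sets (phase_measure K) \<and>
                A K \<subseteq> {\<theta> \<in> space (phase_measure K).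
                          \<exists>S. S \<ge> c * ln (real K) / ln (ln (real K)) \<and> achievable_sum_rate \<theta> K S}) \<and>
           (\<lambda>K. measure (phase_measure K) (A K)) \<longlonglongrightarrow> 1"
proof -
  define t where "t K = ln (real K) / (8 * ln (ln (real K)))" for K :: nat
  define G where "G K = t K * exp (t K * ln (real K)) * exp (-(real K - t K) * exp (- ln (real K) / 2))" for K :: nat
  have G0: "G \<longlonglongrightarrow> 0" unfolding G_def t_def by (rule e4)
  have ev: "eventually (\<lambda>K. 3 \<le> K \<and> 2 \<le> t K \<and> t K \<le> real K \<and> 2 * t K * ln (8 * pi * t K) \<le> ln (real K) / 2) sequentially"
    using eventually_ge_at_top[of 3] e1 e2 e3 unfolding t_def by eventually_elim auto
  then obtain K0 where K0: "\<And>K. K0 \<le> K \<Longrightarrow> 3 \<le> K \<and> 2 \<le> t K \<and> t K \<le> real K \<and> 2 * t K * ln (8 * pi * t K) \<le> ln (real K) / 2"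
    unfolding eventually_sequentially by blast
  define m where "m K = nat \<lfloor>t K\<rfloor>" for K
  define \<eta> where "\<eta> K = 1 / (4 * real (m K))" for K
  define A where "A K = (if K0 \<le> K then Aset K (m K) (\<eta> K) else {})" for K
  have mfacts: "1 \<le> m K \<and> real (m K) \<le> t K \<and> t K - 1 \<le> real (m K) \<and> m K \<le> K" if "K0 \<le> K" for K
  proof -
    have h: "3 \<le> K" "2 \<le> t K" "t K \<le> real K" using K0[OF that] by auto
    have "real (m K) = of_int \<lfloor>t K\<rfloor>" unfolding m_def using h by simp
    then have r: "real (m K) \<le> t K" "t K - 1 \<le> real (m K)" by linarith+
    then have "1 \<le> m K" using h by linarith
    moreover have "m K \<le> K" using r h by linarith
    ultimately show ?thesis using r by simp
  qed
  show ?thesis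
  proof (intro exI[of _ "1/1024::real"] conjI exI[of _ A] allI)
    show "(0::real) < 1/1024" by simp
  next
    fix K
    show "A K \<in> sets (phase_measure K)" unfolding A_def by (simp add: Aset_sets)
  next
    fix K
    show "A K \<subseteq> {\<theta> \<in> space (phase_measure K). \<exists>S. S \<ge> 1/1024 * ln (real K) / ln (ln (real K)) \<and> achievable_sum_rate \<theta> K S}"
    proof (cases "K0 \<le> K")
      case False then show ?thesis by (simp add: A_def)
    next
      case True
      have h: "3 \<le> K" "2 \<le> t K" using K0[OF True] by auto
      have mf: "1 \<le> m K" "real (m K) \<le> t K" "t K - 1 \<le> real (m K)" "m K \<le> K" using mfacts[OF True] by auto
      have lnK: "0 < ln (real K)" using h by simp
      have lnlnK: "0 < ln (ln (real K))"
      proof (rule ccontr)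
        assume "\<not> 0 < ln (ln (real K))"
        then have "t K \<le> 0" unfolding t_def using lnK by (simp add: divide_nonneg_nonpos)
        then show False using h by simp
      qed
      have thr: "1/1024 * ln (real K) / ln (ln (real K)) \<le> real (m K) / 64"
      proof -
        have "1/1024 * ln (real K) / ln (ln (real K)) = t K / 128"
          unfolding t_def using lnlnK by (simp add: field_simps)
        also have "\<dots> \<le> real (m K) / 64" using mf h by simp
        finally show ?thesis .
      qed
      show ?thesis
      proof
        fix \<theta> assume th: "\<theta> \<in> A K"
        then have th': "\<theta> \<in> Aset K (m K) (\<eta> K)" using True by (simp add: A_def)
        then obtain hl where hl: "length hl = m K" "distinct hl" "set hl \<subseteq> {..<K}" "good' (\<eta> K) \<theta> (set hl)"
          unfolding Aset_def by blast
        have cS: "card (set hl) = m K" using hl distinct_card by metis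
        have "good \<theta> (set hl)"
          using good'_good[OF mf(1) _ _ hl(4)[unfolded \<eta>_def]] cS by simp
        then have "achievable_sum_rate \<theta> K (real (card (set hl)) / 64)"
          by (rule achievable[OF hl(3)])
        show "\<theta> \<in> {\<theta> \<in> space (phase_measure K). \<exists>S. S \<ge> 1/1024 * ln (real K) / ln (ln (real K)) \<and> achievable_sum_rate \<theta> K S}"
        proof -
          have sp: "\<theta> \<in> space (phase_measure K)" using th' by (simp add: Aset_def)
          have ach: "achievable_sum_rate \<theta> K (real (m K) / 64)" using \<open>achievable_sum_rate \<theta> K _\<close> cS by simp
          show ?thesis using sp ach thr by blast
        qed
      qed
    qed
  next
    show "(\<lambda>K. measure (phase_measure K) (A K)) \<longlonglongrightarrow> 1"
    proof (rule tendsto_sandwich[of "\<lambda>K. 1 - G K" _ _ "\<lambda>_. 1"])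
      show "eventually (\<lambda>K. measure (phase_measure K) (A K) \<le> 1) sequentially"
        by (intro always_eventually allI prob_space.prob_le_1[OF prob_PM])
      show "(\<lambda>_. 1::real) \<longlonglongrightarrow> 1" by simp
      show "(\<lambda>K. 1 - G K) \<longlonglongrightarrow> 1" using tendsto_diff[OF tendsto_const G0, of 1] by simp
      show "eventually (\<lambda>K. 1 - G K \<le> measure (phase_measure K) (A K)) sequentially"
        unfolding eventually_sequentially
      proof (intro exI[of _ K0] allI impI)
        fix K assume KK: "K0 \<le> K"
        interpret P: prob_space "phase_measure K" by (rule prob_PM)
        have h: "3 \<le> K" "2 \<le> t K" "t K \<le> real K" "2 * t K * ln (8 * pi * t K) \<le> ln (real K) / 2"
          using K0[OF KK] by auto
        have mf: "1 \<le> m K" "real (m K) \<le> t K" "m K \<le> K" using mfacts[OF KK] by auto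
        have \<eta>: "0 < \<eta> K" "\<eta> K \<le> 1/4" using mf(1) unfolding \<eta>_def by (auto simp: field_simps)
        have "measure (phase_measure K) (space (phase_measure K) - Aset K (m K) (\<eta> K))
           \<le> real (m K) * real K ^ m K * (1 - (\<eta> K / (2*pi)) ^ (2 * m K)) ^ (K - m K)"
          by (rule fail_bound) (use h mf \<eta> in auto)
        also have "\<dots> \<le> G K"
          unfolding G_def \<eta>_def by (rule chain[OF mf(1) mf(2) h(3) mf(3) h(4)])
        finally have f: "measure (phase_measure K) (space (phase_measure K) - Aset K (m K) (\<eta> K)) \<le> G K" .
        have "measure (phase_measure K) (space (phase_measure K) - Aset K (m K) (\<eta> K)) = 1 - measure (phase_measure K) (Aset K (m K) (\<eta> K))"
          by (rule P.prob_compl) (rule Aset_sets)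
        then show "1 - G K \<le> measure (phase_measure K) (A K)" using f KK by (simp add: A_def)
      qed
    qed
  qed
qed


end
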